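(* Let $G=K_{s}^{t}$ with $2\le t\le s$, $s+t=n$, and let $\tilde{G}=K^{n_{1},\ldots,n_{k}}_{n}$ with $k\ge2$, $n_i\ge1$, $\sum_{i=1}^k n_i+1=n$. Then $G$ and $\tilde{G}$ are not $D$-cospectral.
   Context: Two connected graphs are $D$-cospectral if their distance matrices have the same spectrum. $K_{s}^{t}$ denotes the graph on $s+t$ vertices obtained from the complete graph $K_s$ by attaching a pendant edge (a new vertex of degree 1) to each of $t$ distinct vertices of $K_s$. $K^{n_{1},\ldots,n_{k}}_{n}$ denotes the graph on $n$ vertices having a vertex $v$ of degree $n-1$ such that $G-v$ is the disjoint union of complete graphs $K_{n_1},\dots,K_{n_k}$. *)

theory Defs
  imports Main "Jordan_Normal_Form.Char_Poly" "HOL-Computational_Algebra.Polynomial"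
begin

text \<open>A simple graph on vertex set {0..<n} is given by a symmetric irreflexive
  adjacency predicate adj.\<close>

definition is_walk :: "(nat \<Rightarrow> nat \<Rightarrow> bool) \<Rightarrow> nat \<Rightarrow> nat list \<Rightarrow> bool" where
  "is_walk adj n p \<longleftrightarrow> p \<noteq> [] \<and> set p \<subseteq> {0..<n} \<and>
     (\<forall>i. Suc i < length p \<longrightarrow> adj (p ! i) (p ! Suc i))"

definition graph_dist :: "(nat \<Rightarrow> nat \<Rightarrow> bool) \<Rightarrow> nat \<Rightarrow> nat \<Rightarrow> nat \<Rightarrow> nat" where
  "graph_dist adj n u v = (LEAST k. \<exists>p. is_walk adj n p \<and> hd p = u \<and> last p = v \<and> length p = Suc k)"

definition connected_graph :: "(nat \<Rightarrow> nat \<Rightarrow> bool) \<Rightarrow> nat \<Rightarrow> bool" where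
  "connected_graph adj n \<longleftrightarrow> (\<forall>u<n. \<forall>v<n. \<exists>p. is_walk adj n p \<and> hd p = u \<and> last p = v)"

definition dist_matrix :: "(nat \<Rightarrow> nat \<Rightarrow> bool) \<Rightarrow> nat \<Rightarrow> real mat" where
  "dist_matrix adj n = mat n n (\<lambda>(i, j). real (graph_dist adj n i j))"

definition spectrum_mult :: "real mat \<Rightarrow> complex \<Rightarrow> nat" where
  "spectrum_mult A z = order z (char_poly (map_mat complex_of_real A))"

definition D_cospectral :: "(nat \<Rightarrow> nat \<Rightarrow> bool) \<Rightarrow> nat \<Rightarrow> (nat \<Rightarrow> nat \<Rightarrow> bool) \<Rightarrow> nat \<Rightarrow> bool" where
  "D_cospectral adj1 n1 adj2 n2 \<longleftrightarrow> n1 = n2 \<and> spectrum_mult (dist_matrix adj1 n1) = spectrum_mult (dist_matrix adj2 n2)"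

text \<open>K_s^t on vertices {0..<s+t}: 0..<s form a clique, vertex s+i is pendant at i (i<t).\<close>

definition K_pend :: "nat \<Rightarrow> nat \<Rightarrow> nat \<Rightarrow> nat \<Rightarrow> bool" where
  "K_pend s t u v \<longleftrightarrow>
     (u < s \<and> v < s \<and> u \<noteq> v) \<or>
     (u < t \<and> v = s + u) \<or> (v < t \<and> u = s + v)"

text \<open>K_n^{n_1,...,n_k} with ns = [n_1,...,n_k]: vertex 0 is the dominating vertex;
  vertex v \<ge> 1 lies in block j iff sum of the first j block sizes \<le> v - 1 < sum of the
  first j+1 block sizes; each block is a clique.\<close>

definition in_block :: "nat list \<Rightarrow> nat \<Rightarrow> nat \<Rightarrow> bool" where
  "in_block ns j v \<longleftrightarrow> j < length ns \<and> 1 \<le> v \<and>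
     sum_list (take j ns) \<le> v - 1 \<and> v - 1 < sum_list (take (Suc j) ns)"

definition K_cone :: "nat list \<Rightarrow> nat \<Rightarrow> nat \<Rightarrow> bool" where
  "K_cone ns u v \<longleftrightarrow> u \<noteq> v \<and>
     (u = 0 \<or> v = 0 \<or> (\<exists>j. in_block ns j u \<and> in_block ns j v))"

end

theory Submission
  imports Defs
begin


lemma walk_nonempty: "is_walk adj n p \<Longrightarrow> p \<noteq> []" by (simp add: is_walk_def)

lemma walk_len1: assumes "is_walk adj n p" "length p = 1" shows "hd p = last p"
  using assms by (cases p) auto

lemma walk_len2: assumes "is_walk adj n p" "length p = 2" shows "adj (hd p) (last p)"
proof -
  obtain a b where p: "p = [a,b]" using assms(2)
    by (metis One_nat_def Suc_1 length_0_conv length_Suc_conv)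
  show ?thesis using assms(1) unfolding p is_walk_def by (auto dest: spec[of _ 0])
qed

lemma walk_len3: assumes "is_walk adj n p" "length p = 3"
  shows "\<exists>w<n. adj (hd p) w \<and> adj w (last p)"
proof -
  obtain a b c where p: "p = [a,b,c]" using assms(2)
    by (metis (no_types, lifting) length_0_conv length_Suc_conv numeral_3_eq_3)
  have "adj a b" using assms(1) unfolding p is_walk_def by (auto dest: spec[of _ 0])
  moreover have "adj b c" using assms(1) unfolding p is_walk_def by (auto dest: spec[of _ 1])
  moreover have "b < n" using assms(1) unfolding p is_walk_def by auto
  ultimately show ?thesis unfolding p by auto
qed

lemma dist_eqI:
  assumes "is_walk adj n p" "hd p = u" "last p = v" "length p = Suc k"
    and "\<And>q. is_walk adj n q \<Longrightarrow> hd q = u \<Longrightarrow> last q = v \<Longrightarrow> Suc k \<le> length q"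
  shows "graph_dist adj n u v = k"
  unfolding graph_dist_def
proof (rule Least_equality)
  show "\<exists>p. is_walk adj n p \<and> hd p = u \<and> last p = v \<and> length p = Suc k" using assms by blast
next
  fix y assume "\<exists>p. is_walk adj n p \<and> hd p = u \<and> last p = v \<and> length p = Suc y"
  then obtain q where "is_walk adj n q" "hd q = u" "last q = v" "length q = Suc y" by blast
  with assms(5)[of q] show "k \<le> y" by simp
qed

lemma dist0: assumes "u < n" shows "graph_dist adj n u u = 0"
proof (rule dist_eqI[of _ _ "[u]"])
  show "is_walk adj n [u]" using assms by (simp add: is_walk_def)
next
  fix q assume "is_walk adj n q"
  then have "q \<noteq> []" by (rule walk_nonempty)
  then show "Suc 0 \<le> length q" by (cases q) auto
qed auto

lemma dist1: assumes "u < n" "v < n" "u \<noteq> v" "adj u v" shows "graph_dist adj n u v = 1"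
proof (rule dist_eqI[of _ _ "[u,v]"])
  show "is_walk adj n [u, v]" using assms by (auto simp: is_walk_def less_Suc_eq)
next
  fix q assume q: "is_walk adj n q" "hd q = u" "last q = v"
  have "length q \<noteq> 0" using q walk_nonempty by auto
  moreover have "length q \<noteq> 1" using walk_len1[OF q(1)] q assms by auto
  ultimately show "Suc 1 \<le> length q" by linarith
qed auto

lemma dist2: assumes "u < n" "v < n" "w < n" "u \<noteq> v" "\<not> adj u v" "adj u w" "adj w v"
  shows "graph_dist adj n u v = 2"
proof (rule dist_eqI[of _ _ "[u,w,v]"])
  show "is_walk adj n [u, w, v]" using assms by (auto simp: is_walk_def less_Suc_eq nth_Cons split: nat.splits)
next
  fix q assume q: "is_walk adj n q" "hd q = u" "last q = v"
  have "length q \<noteq> 0" using q walk_nonempty by auto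
  moreover have "length q \<noteq> 1" using walk_len1[OF q(1)] q assms by auto
  moreover have "length q \<noteq> 2" using walk_len2[OF q(1)] q assms by auto
  ultimately show "Suc 2 \<le> length q" by linarith
qed auto

lemma dist3: assumes "u < n" "v < n" "wa < n" "wb < n" "u \<noteq> v" "\<not> adj u v"
  "\<And>w. w < n \<Longrightarrow> adj u w \<Longrightarrow> adj w v \<Longrightarrow> False"
  "adj u wa" "adj wa wb" "adj wb v"
  shows "graph_dist adj n u v = 3"
proof (rule dist_eqI[of _ _ "[u,wa,wb,v]"])
  show "is_walk adj n [u, wa, wb, v]" using assms
    by (auto simp: is_walk_def less_Suc_eq nth_Cons split: nat.splits)
next
  fix q assume q: "is_walk adj n q" "hd q = u" "last q = v"
  have "length q \<noteq> 0" using q walk_nonempty by auto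
  moreover have "length q \<noteq> 1" using walk_len1[OF q(1)] q assms by auto
  moreover have "length q \<noteq> 2" using walk_len2[OF q(1)] q assms by auto
  moreover have "length q \<noteq> 3" using walk_len3[OF q(1)] q assms by auto
  ultimately show "Suc 3 \<le> length q" by linarith
qed auto


lemma char_poly_nz: assumes "(A::'a::comm_ring_1 mat) \<in> carrier_mat n n" shows "char_poly A \<noteq> 0"
  using degree_monic_char_poly[OF assms] by auto

lemma spec_pos_iff: assumes "A \<in> carrier_mat n n"
  shows "spectrum_mult A z > 0 \<longleftrightarrow> eigenvalue (map_mat complex_of_real A) z"
proof -
  have M: "map_mat complex_of_real A \<in> carrier_mat n n" using assms by simp
  show ?thesis unfolding spectrum_mult_def
    by (subst order_gt_0_iff[OF char_poly_nz[OF M]]) (rule eigenvalue_root_char_poly[OF M, symmetric])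
qed

lemma dist_matrix_carrier: "dist_matrix adj n \<in> carrier_mat n n"
  by (simp add: dist_matrix_def)

lemma eigenvalue_iff: assumes "M \<in> carrier_mat n n"
  shows "eigenvalue M z \<longleftrightarrow> (\<exists>v. v \<in> carrier_vec n \<and> v \<noteq> 0\<^sub>v n \<and> (\<forall>i<n. (M *\<^sub>v v) $ i = z * v $ i))"
proof -
  have "M *\<^sub>v v = z \<cdot>\<^sub>v v \<longleftrightarrow> (\<forall>i<n. (M *\<^sub>v v) $ i = z * v $ i)" if "v \<in> carrier_vec n" for v
  proof
    assume eq: "M *\<^sub>v v = z \<cdot>\<^sub>v v"
    show "\<forall>i<n. (M *\<^sub>v v) $ i = z * v $ i"
    proof (intro allI impI)
      fix i assume "i < n"
      then have "(M *\<^sub>v v) $ i = (z \<cdot>\<^sub>v v) $ i" by (simp add: eq)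
      also have "\<dots> = z * v $ i" using \<open>i < n\<close> that by simp
      finally show "(M *\<^sub>v v) $ i = z * v $ i" .
    qed
  next
    assume "\<forall>i<n. (M *\<^sub>v v) $ i = z * v $ i"
    then show "M *\<^sub>v v = z \<cdot>\<^sub>v v" using that assms by (intro eq_vecI) auto
  qed
  then show ?thesis using assms unfolding eigenvalue_def eigenvector_def by auto
qed

lemma dm_entry: assumes "v \<in> carrier_vec n" "i < n"
  shows "(map_mat complex_of_real (dist_matrix adj n) *\<^sub>v v) $ i
     = (\<Sum>j<n. complex_of_real (real (graph_dist adj n i j)) * v $ j)"
  using assms by (auto simp: dist_matrix_def mult_mat_vec_def scalar_prod_def row_def
      atLeast0LessThan intro!: sum.cong)

definition kd :: "nat \<Rightarrow> nat \<Rightarrow> nat \<Rightarrow> nat" where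
  "kd s u v = (if u = v then 0 else
     (if (if u < s then u else u - s) = (if v < s then v else v - s) then 0 else 1)
     + (if s \<le> u then 1 else 0) + (if s \<le> v then 1 else 0))"

lemma K_dist: assumes "t \<le> s" "u < s + t" "v < s + t"
  shows "graph_dist (K_pend s t) (s+t) u v = kd s u v"
proof -
  consider "u = v" | "u \<noteq> v" "u < s" "v < s" | "u \<noteq> v" "u < s" "s \<le> v"
    | "u \<noteq> v" "s \<le> u" "v < s" | "u \<noteq> v" "s \<le> u" "s \<le> v" by linarith
  then show ?thesis
  proof cases
    case 1 then show ?thesis using assms dist0 by (simp add: kd_def)
  next
    case 2 then show ?thesis using assms by (subst dist1) (auto simp: kd_def K_pend_def)
  next
    case 3
    then obtain j where j: "v = s + j" "j < t" using assms by (metis add_less_cancel_left le_Suc_ex)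
    show ?thesis
    proof (cases "j = u")
      case True then show ?thesis using assms 3 j by (subst dist1) (auto simp: kd_def K_pend_def)
    next
      case False
      have "graph_dist (K_pend s t) (s+t) u v = 2"
        by (rule dist2[where w=j]) (use assms 3 j False in \<open>auto simp: K_pend_def\<close>)
      then show ?thesis using 3 j False by (simp add: kd_def)
    qed
  next
    case 4
    then obtain j where j: "u = s + j" "j < t" using assms by (metis add_less_cancel_left le_Suc_ex)
    show ?thesis
    proof (cases "j = v")
      case True then show ?thesis using assms 4 j by (subst dist1) (auto simp: kd_def K_pend_def)
    next
      case False
      have "graph_dist (K_pend s t) (s+t) u v = 2"
        by (rule dist2[where w=j]) (use assms 4 j False in \<open>auto simp: K_pend_def\<close>)
      then show ?thesis using 4 j False by (simp add: kd_def)
    qed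
  next
    case 5
    obtain i where i: "u = s + i" "i < t" using assms 5 by (metis add_less_cancel_left le_Suc_ex)
    obtain j where j: "v = s + j" "j < t" using assms 5 by (metis add_less_cancel_left le_Suc_ex)
    have ij: "i \<noteq> j" using 5 i j by auto
    have "graph_dist (K_pend s t) (s+t) u v = 3"
    proof (rule dist3[where wa=i and wb=j])
      fix w assume "w < s + t" "K_pend s t u w" "K_pend s t w v"
      then show False using i j ij assms by (auto simp: K_pend_def)
    qed (use assms i j ij in \<open>auto simp: K_pend_def\<close>)
    then show ?thesis using 5 i j ij by (simp add: kd_def)
  qed
qed

lemma cone_dist: assumes "u < n" "v < n"
  shows "graph_dist (K_cone ns) n u v = (if u = v then 0 else if K_cone ns u v then 1 else 2)"
proof -
  consider "u = v" | "u \<noteq> v" "K_cone ns u v" | "u \<noteq> v" "\<not> K_cone ns u v" by blast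
  then show ?thesis
  proof cases
    case 1 then show ?thesis using assms dist0 by simp
  next
    case 2 then show ?thesis using assms dist1 by simp
  next
    case 3
    then have "u \<noteq> 0" "v \<noteq> 0" by (auto simp: K_cone_def)
    then have "graph_dist (K_cone ns) n u v = 2"
      by (intro dist2[where w=0]) (use assms 3 in \<open>auto simp: K_cone_def\<close>)
    then show ?thesis using 3 by simp
  qed
qed



lemma real_ev:
  fixes f :: "nat \<Rightarrow> real"
  assumes dd: "\<And>i j. i < n \<Longrightarrow> j < n \<Longrightarrow> graph_dist adj n i j = dd i j"
    and rows: "\<And>i. i < n \<Longrightarrow> (\<Sum>j<n. real (dd i j) * f j) = lam * f i"
    and ii: "ii < n" "f ii \<noteq> 0"
  shows "spectrum_mult (dist_matrix adj n) (complex_of_real lam) > 0"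
proof -
  define v where "v = vec n (\<lambda>j. complex_of_real (f j))"
  have v: "v \<in> carrier_vec n" unfolding v_def by simp
  have "v \<noteq> 0\<^sub>v n"
  proof
    assume "v = 0\<^sub>v n"
    then have "v $ ii = 0" using ii by simp
    then show False using ii unfolding v_def by simp
  qed
  moreover have "\<forall>i<n. (map_mat complex_of_real (dist_matrix adj n) *\<^sub>v v) $ i = complex_of_real lam * v $ i"
  proof (intro allI impI)
    fix i assume i: "i < n"
    have "(map_mat complex_of_real (dist_matrix adj n) *\<^sub>v v) $ i
        = (\<Sum>j<n. complex_of_real (real (graph_dist adj n i j)) * v $ j)" by (rule dm_entry[OF v i])
    also have "\<dots> = (\<Sum>j<n. complex_of_real (real (dd i j) * f j))"
      using i dd unfolding v_def by (intro sum.cong) auto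
    also have "\<dots> = complex_of_real (\<Sum>j<n. real (dd i j) * f j)" by simp
    also have "\<dots> = complex_of_real lam * v $ i" using rows[OF i] i unfolding v_def by simp
    finally show "(map_mat complex_of_real (dist_matrix adj n) *\<^sub>v v) $ i = complex_of_real lam * v $ i" .
  qed
  ultimately have "eigenvalue (map_mat complex_of_real (dist_matrix adj n)) (complex_of_real lam)"
    using v by (subst eigenvalue_iff[where n=n]) (auto simp: dist_matrix_carrier)
  then show ?thesis using spec_pos_iff[OF dist_matrix_carrier] by blast
qed

lemma sum_if_in: assumes "finite A" "c \<in> A"
  shows "(\<Sum>j\<in>A. if j = c then (p::'a::comm_ring_1) else q) = p + of_nat (card A - 1) * q"
proof -
  have "(\<Sum>j\<in>A. if j = c then p else q) = (\<Sum>j\<in>A. (if j = c then p - q else 0) + q)"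
    by (intro sum.cong) auto
  also have "\<dots> = p - q + of_nat (card A) * q" using assms by (simp add: sum.distrib sum.delta)
  also have "\<dots> = p + of_nat (card A - 1) * q"
  proof -
    have "card A \<ge> 1" using assms by (metis card_0_eq empty_iff less_one not_le)
    then show ?thesis by (simp add: of_nat_diff algebra_simps)
  qed
  finally show ?thesis .
qed

lemma sum_split3: fixes s t :: nat and g :: "nat \<Rightarrow> 'a::comm_monoid_add" assumes "t \<le> s"
  shows "(\<Sum>j<s+t. g j) = (\<Sum>j\<in>{0..<t}. g j) + (\<Sum>j\<in>{t..<s}. g j) + (\<Sum>j\<in>{s..<s+t}. g j)"
proof -
  have "(\<Sum>j<s+t. g j) = (\<Sum>j\<in>{0..<s}. g j) + (\<Sum>j\<in>{s..<s+t}. g j)"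
    using sum.atLeastLessThan_concat[of 0 s "s+t" g] by (simp add: atLeast0LessThan)
  moreover have "(\<Sum>j\<in>{0..<s}. g j) = (\<Sum>j\<in>{0..<t}. g j) + (\<Sum>j\<in>{t..<s}. g j)"
    using assms by (intro sum.atLeastLessThan_concat[symmetric]) auto
  ultimately show ?thesis by simp
qed


lemma K_ev1: assumes "2 \<le> t" "t \<le> s"
  shows "spectrum_mult (dist_matrix (K_pend s t) (s+t)) (complex_of_real (sqrt 2 - 2)) > 0"
proof -
  define a :: real where "a = 1 - sqrt 2"
  define f :: "nat \<Rightarrow> real" where "f j = (if j = 0 then 1 else 0) + (if j = 1 then -1 else 0)
     + (if j = s then a else 0) + (if j = s + 1 then - a else 0)" for j
  have s2: "sqrt 2 * sqrt 2 = (2::real)" by simp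
  have rows: "(\<Sum>j<s+t. real (kd s i j) * f j) = (sqrt 2 - 2) * f i" if i: "i < s + t" for i
  proof -
    have "(\<Sum>j<s+t. real (kd s i j) * f j) = (\<Sum>j<s+t. (if j = 0 then real (kd s i j) else 0)
       + (if j = 1 then - real (kd s i j) else 0) + (if j = s then a * real (kd s i j) else 0)
       + (if j = s + 1 then - (a * real (kd s i j)) else 0))"
      using assms unfolding f_def by (intro sum.cong) auto
    also have "\<dots> = real (kd s i 0) - real (kd s i 1) + a * real (kd s i s) - a * real (kd s i (s+1))"
    proof -
      have "s \<noteq> 0" "s \<noteq> 1" "0 < s + t" "1 < s + t" "s < s + t" "s + 1 < s + t" using assms by auto
      then show ?thesis by (simp add: sum.distrib sum.delta)
    qed
    also have "\<dots> = (sqrt 2 - 2) * f i"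
    proof -
      consider "i = 0" | "i = 1" | "i = s" | "i = s + 1" | "1 < i" "i < s" | "s + 1 < i"
        using assms i by linarith
      then show ?thesis
      proof cases
        case 1 then show ?thesis using assms by (simp add: kd_def f_def a_def algebra_simps)
      next
        case 2 then show ?thesis using assms by (simp add: kd_def f_def a_def algebra_simps)
      next
        case 3 then show ?thesis using assms s2 by (simp add: kd_def f_def a_def algebra_simps)
      next
        case 4 then show ?thesis using assms s2 by (simp add: kd_def f_def a_def algebra_simps)
      next
        case 5 then show ?thesis using assms by (simp add: kd_def f_def)
      next
        case 6 then show ?thesis using assms by (simp add: kd_def f_def)
      qed
    qed
    finally show ?thesis .
  qed
  show ?thesis
    by (rule real_ev[where dd="kd s" and f=f and ii=0])
       (use assms rows K_dist in \<open>auto simp: f_def\<close>)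
qed


lemma card_ivl_m1: "b - a - 1 = b - Suc a" by simp

lemma K_ev2: assumes "2 \<le> t" "t < s"
  shows "\<exists>mu. -1 < mu \<and> mu < -3/5 \<and> spectrum_mult (dist_matrix (K_pend s t) (s+t)) (complex_of_real mu) > 0"
proof -
  define S where "S = real s"
  define T where "T = real t"
  have ST: "S - T \<ge> 1" "T \<ge> 2" using assms unfolding S_def T_def by auto
  define A where "A mu = (S - T) * (T + 1 + mu)" for mu :: real
  define B where "B mu = -(2*T - 1) * (1 + 2*mu) - (T - 1 - mu) * (T + 1 + mu)" for mu :: real
  define C where "C mu = (1 + 2*mu) * (S - T)" for mu :: real
  define R where "R mu = T * A mu + (S - T - 1 - mu) * B mu + 2 * T * C mu" for mu :: real
  have Rm1: "R (-1) = -(S - T)" unfolding R_def A_def B_def C_def by (simp add: algebra_simps)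
  have R35: "R (-3/5) = (S - T) * (2*T/5 - 1/25) + 2/5 * (T - 1/5)^2"
    unfolding R_def A_def B_def C_def power2_eq_square by (simp add: field_simps)
  have "R (-3/5) > 0"
  proof -
    have "(S - T) * (2*T/5 - 1/25) > 0" using ST by (intro mult_pos_pos) auto
    moreover have "2/5 * (T - 1/5)^2 \<ge> 0" by simp
    ultimately show ?thesis using R35 by linarith
  qed
  moreover have "R (-1) < 0" using Rm1 ST by simp
  moreover have "continuous_on {-1..-3/5} R" unfolding R_def A_def B_def C_def
    by (intro continuous_intros)
  ultimately obtain mu where mu: "-1 \<le> mu" "mu \<le> -3/5" "R mu = 0"
    using IVT'[of R "-1" 0 "-3/5"] by force
  have mu1: "mu \<noteq> -1" using mu \<open>R (-1) < 0\<close> by auto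
  have mu2: "mu \<noteq> -3/5" using mu \<open>R (-3/5) > 0\<close> by auto
  define f where "f j = (if j < t then A mu else if j < s then B mu else C mu)" for j
  have rows: "(\<Sum>j<s+t. real (kd s i j) * f j) = mu * f i" if i: "i < s + t" for i
  proof -
    have split: "(\<Sum>j<s+t. real (kd s i j) * f j) = A mu * (\<Sum>j\<in>{0..<t}. real (kd s i j))
        + B mu * (\<Sum>j\<in>{t..<s}. real (kd s i j)) + C mu * (\<Sum>j\<in>{s..<s+t}. real (kd s i j))"
    proof -
      have "(\<Sum>j<s+t. real (kd s i j) * f j) = (\<Sum>j\<in>{0..<t}. real (kd s i j) * f j)
          + (\<Sum>j\<in>{t..<s}. real (kd s i j) * f j) + (\<Sum>j\<in>{s..<s+t}. real (kd s i j) * f j)"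
        using assms by (intro sum_split3) simp
      also have "(\<Sum>j\<in>{0..<t}. real (kd s i j) * f j) = A mu * (\<Sum>j\<in>{0..<t}. real (kd s i j))"
        using assms unfolding sum_distrib_left f_def by (intro sum.cong) auto
      also have "(\<Sum>j\<in>{t..<s}. real (kd s i j) * f j) = B mu * (\<Sum>j\<in>{t..<s}. real (kd s i j))"
        using assms unfolding sum_distrib_left f_def by (intro sum.cong) auto
      also have "(\<Sum>j\<in>{s..<s+t}. real (kd s i j) * f j) = C mu * (\<Sum>j\<in>{s..<s+t}. real (kd s i j))"
        using assms unfolding sum_distrib_left f_def by (intro sum.cong) auto
      finally show ?thesis .
    qed
    consider "i < t" | "t \<le> i" "i < s" | "s \<le> i" by linarith
    then show ?thesis
    proof cases
      case 1
      have sP: "(\<Sum>j\<in>{0..<t}. real (kd s i j)) = T - 1"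
      proof -
        have "(\<Sum>j\<in>{0..<t}. real (kd s i j)) = (\<Sum>j\<in>{0..<t}. if j = i then 0 else 1)"
          using 1 assms by (intro sum.cong) (auto simp: kd_def)
        also have "\<dots> = T - 1" using 1 assms by (subst sum_if_in) (auto simp: T_def of_nat_diff)
        finally show ?thesis .
      qed
      have sQ: "(\<Sum>j\<in>{t..<s}. real (kd s i j)) = S - T"
      proof -
        have "(\<Sum>j\<in>{t..<s}. real (kd s i j)) = (\<Sum>j\<in>{t..<s}. 1)"
          using 1 assms by (intro sum.cong) (auto simp: kd_def)
        then show ?thesis using assms by (simp add: S_def T_def of_nat_diff)
      qed
      have sL: "(\<Sum>j\<in>{s..<s+t}. real (kd s i j)) = 2 * T - 1"
      proof -
        have "(\<Sum>j\<in>{s..<s+t}. real (kd s i j)) = (\<Sum>j\<in>{s..<s+t}. if j = s + i then 1 else 2)"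
          using 1 assms by (intro sum.cong) (auto simp: kd_def)
        also have "\<dots> = 2 * T - 1" using 1 assms by (subst sum_if_in) (auto simp: T_def of_nat_diff)
        finally show ?thesis .
      qed
      have fi: "f i = A mu" using 1 unfolding f_def by simp
      show ?thesis unfolding split sP sQ sL fi unfolding A_def B_def C_def by (simp add: algebra_simps)
    next
      case 2
      have sP: "(\<Sum>j\<in>{0..<t}. real (kd s i j)) = T"
      proof -
        have "(\<Sum>j\<in>{0..<t}. real (kd s i j)) = (\<Sum>j\<in>{0..<t}. 1)"
          using 2 assms by (intro sum.cong) (auto simp: kd_def)
        then show ?thesis by (simp add: T_def)
      qed
      have sQ: "(\<Sum>j\<in>{t..<s}. real (kd s i j)) = S - T - 1"
      proof -
        have "(\<Sum>j\<in>{t..<s}. real (kd s i j)) = (\<Sum>j\<in>{t..<s}. if j = i then 0 else 1)"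
          using 2 assms by (intro sum.cong) (auto simp: kd_def)
        also have "\<dots> = S - T - 1" using 2 assms by (subst sum_if_in) (auto simp: S_def T_def of_nat_diff)
        finally show ?thesis .
      qed
      have sL: "(\<Sum>j\<in>{s..<s+t}. real (kd s i j)) = 2 * T"
      proof -
        have "(\<Sum>j\<in>{s..<s+t}. real (kd s i j)) = (\<Sum>j\<in>{s..<s+t}. 2)"
          using 2 assms by (intro sum.cong) (auto simp: kd_def)
        then show ?thesis by (simp add: T_def)
      qed
      have fi: "f i = B mu" using 2 unfolding f_def by simp
      have "A mu * T + B mu * (S - T - 1) + C mu * (2 * T) - mu * B mu = R mu"
        unfolding R_def by (simp add: algebra_simps)
      then show ?thesis unfolding split sP sQ sL fi using mu(3) by simp
    next
      case 3
      obtain c where c: "i = s + c" "c < t" using 3 i by (metis add_less_cancel_left le_Suc_ex)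
      have sP: "(\<Sum>j\<in>{0..<t}. real (kd s i j)) = 2 * T - 1"
      proof -
        have "(\<Sum>j\<in>{0..<t}. real (kd s i j)) = (\<Sum>j\<in>{0..<t}. if j = c then 1 else 2)"
          using c assms by (intro sum.cong) (auto simp: kd_def)
        also have "\<dots> = 2 * T - 1" using c assms by (subst sum_if_in) (auto simp: T_def of_nat_diff)
        finally show ?thesis .
      qed
      have sQ: "(\<Sum>j\<in>{t..<s}. real (kd s i j)) = 2 * (S - T)"
      proof -
        have "(\<Sum>j\<in>{t..<s}. real (kd s i j)) = (\<Sum>j\<in>{t..<s}. 2)"
          using c assms by (intro sum.cong) (auto simp: kd_def)
        then show ?thesis using assms by (simp add: S_def T_def of_nat_diff)
      qed
      have sL: "(\<Sum>j\<in>{s..<s+t}. real (kd s i j)) = 3 * (T - 1)"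
      proof -
        have "(\<Sum>j\<in>{s..<s+t}. real (kd s i j)) = (\<Sum>j\<in>{s..<s+t}. if j = i then 0 else 3)"
          using c assms by (intro sum.cong) (auto simp: kd_def)
        also have "\<dots> = 3 * (T - 1)" using c assms by (subst sum_if_in) (auto simp: T_def of_nat_diff)
        finally show ?thesis .
      qed
      have fi: "f i = C mu" using 3 assms unfolding f_def by simp
      show ?thesis unfolding split sP sQ sL fi unfolding A_def B_def C_def by (simp add: algebra_simps)
    qed
  qed
  have fs: "f s \<noteq> 0"
  proof -
    have "1 + 2 * mu \<noteq> 0" using mu by auto
    moreover have "S - T \<noteq> 0" using ST by auto
    ultimately show ?thesis using assms unfolding f_def C_def by simp
  qed
  have "spectrum_mult (dist_matrix (K_pend s t) (s+t)) (complex_of_real mu) > 0"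
    by (rule real_ev[where dd="kd s" and f=f and ii=s]) (use assms rows K_dist fs in auto)
  then show ?thesis using mu mu1 mu2 by force
qed


lemma sum_if_in2: fixes p q :: "'a::comm_ring_1" assumes "finite A" "c \<in> A"
  shows "(\<Sum>j\<in>A. if j = c then p * g j else q * g j) = q * (\<Sum>j\<in>A. g j) + (p - q) * g c"
proof -
  have "(\<Sum>j\<in>A. if j = c then p * g j else q * g j) = (\<Sum>j\<in>A. q * g j + (if j = c then (p - q) * g j else 0))"
    by (intro sum.cong) (auto simp: algebra_simps)
  also have "\<dots> = q * (\<Sum>j\<in>A. g j) + (p - q) * g c" using assms
    by (simp add: sum.distrib sum_distrib_left sum.delta)
  finally show ?thesis .
qed

lemma nat_quad_ne: "(t::nat) * t + 2 \<noteq> 6 * t"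
proof (cases "t \<le> 6")
  case True
  then have "t = 0 \<or> t = 1 \<or> t = 2 \<or> t = 3 \<or> t = 4 \<or> t = 5 \<or> t = 6" by linarith
  then show ?thesis by auto
next
  case False
  then have "t * t \<ge> 7 * t" by simp
  then show ?thesis by linarith
qed


lemma K_tt_noev: assumes t2: "2 \<le> t" and L: "L = -1 \<or> L = -2"
  shows "\<not> eigenvalue (map_mat complex_of_real (dist_matrix (K_pend t t) (t+t))) L"
proof
  let ?M = "map_mat complex_of_real (dist_matrix (K_pend t t) (t+t))"
  assume "eigenvalue ?M L"
  then obtain x where x: "x \<in> carrier_vec (t+t)" "x \<noteq> 0\<^sub>v (t+t)"
    and ev: "\<forall>i<t+t. (?M *\<^sub>v x) $ i = L * x $ i"
    using eigenvalue_iff[of ?M "t+t" L] by (auto simp: dist_matrix_carrier)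
  define Y where "Y = (\<Sum>j\<in>{0..<t}. x $ j)"
  define Z where "Z = (\<Sum>j\<in>{t..<t+t}. x $ j)"
  define T :: complex where "T = of_nat t"
  have Zs: "Z = (\<Sum>i\<in>{0..<t}. x $ (t + i))"
    unfolding Z_def using sum.atLeastLessThan_shift_bounds[of "\<lambda>j. x $ j" 0 t t] by (simp add: comp_def add.commute)
  have row: "(?M *\<^sub>v x) $ i = (\<Sum>j\<in>{0..<t}. complex_of_real (real (kd t i j)) * x $ j)
     + (\<Sum>j\<in>{t..<t+t}. complex_of_real (real (kd t i j)) * x $ j)" if i: "i < t + t" for i
  proof -
    have "(?M *\<^sub>v x) $ i = (\<Sum>j<t+t. complex_of_real (real (graph_dist (K_pend t t) (t+t) i j)) * x $ j)"
      by (rule dm_entry[OF x(1) i])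
    also have "\<dots> = (\<Sum>j<t+t. complex_of_real (real (kd t i j)) * x $ j)"
      using i by (intro sum.cong) (auto simp: K_dist)
    also have "\<dots> = (\<Sum>j\<in>{0..<t}. complex_of_real (real (kd t i j)) * x $ j)
     + (\<Sum>j\<in>{t..<t+t}. complex_of_real (real (kd t i j)) * x $ j)"
      using sum_split3[of t t "\<lambda>j. complex_of_real (real (kd t i j)) * x $ j"] by simp
    finally show ?thesis .
  qed
  have eP: "L * x $ i = Y - x $ i + 2 * Z - x $ (t + i)" if i: "i < t" for i
  proof -
    have a: "(\<Sum>j\<in>{0..<t}. complex_of_real (real (kd t i j)) * x $ j) = Y - x $ i"
    proof -
      have "(\<Sum>j\<in>{0..<t}. complex_of_real (real (kd t i j)) * x $ j)
          = (\<Sum>j\<in>{0..<t}. if j = i then 0 * x $ j else 1 * x $ j)"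
        using i by (intro sum.cong) (auto simp: kd_def)
      also have "\<dots> = Y - x $ i" using i unfolding Y_def by (subst sum_if_in2) auto
      finally show ?thesis .
    qed
    have b: "(\<Sum>j\<in>{t..<t+t}. complex_of_real (real (kd t i j)) * x $ j) = 2 * Z - x $ (t + i)"
    proof -
      have "(\<Sum>j\<in>{t..<t+t}. complex_of_real (real (kd t i j)) * x $ j)
          = (\<Sum>j\<in>{t..<t+t}. if j = t + i then 1 * x $ j else 2 * x $ j)"
        using i by (intro sum.cong) (auto simp: kd_def)
      also have "\<dots> = 2 * Z - x $ (t + i)" using i unfolding Z_def by (subst sum_if_in2) auto
      finally show ?thesis .
    qed
    have "(?M *\<^sub>v x) $ i = L * x $ i" using ev i by auto
    then have "L * x $ i = (Y - x $ i) + (2 * Z - x $ (t + i))" using row[of i] i a b by simp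
    then show ?thesis by (simp add: algebra_simps)
  qed
  have eL: "L * x $ (t + i) = 2 * Y - x $ i + 3 * Z - 3 * x $ (t + i)" if i: "i < t" for i
  proof -
    have a: "(\<Sum>j\<in>{0..<t}. complex_of_real (real (kd t (t + i) j)) * x $ j) = 2 * Y - x $ i"
    proof -
      have "(\<Sum>j\<in>{0..<t}. complex_of_real (real (kd t (t + i) j)) * x $ j)
          = (\<Sum>j\<in>{0..<t}. if j = i then 1 * x $ j else 2 * x $ j)"
        using i by (intro sum.cong) (auto simp: kd_def)
      also have "\<dots> = 2 * Y - x $ i" using i unfolding Y_def by (subst sum_if_in2) auto
      finally show ?thesis .
    qed
    have b: "(\<Sum>j\<in>{t..<t+t}. complex_of_real (real (kd t (t + i) j)) * x $ j) = 3 * Z - 3 * x $ (t + i)"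
    proof -
      have "(\<Sum>j\<in>{t..<t+t}. complex_of_real (real (kd t (t + i) j)) * x $ j)
          = (\<Sum>j\<in>{t..<t+t}. if j = t + i then 0 * x $ j else 3 * x $ j)"
        using i by (intro sum.cong) (auto simp: kd_def)
      also have "\<dots> = 3 * Z - 3 * x $ (t + i)" using i unfolding Z_def by (subst sum_if_in2) auto
      finally show ?thesis .
    qed
    have "(?M *\<^sub>v x) $ (t + i) = L * x $ (t + i)" using ev i by auto
    then have "L * x $ (t + i) = (2 * Y - x $ i) + (3 * Z - 3 * x $ (t + i))" using row[of "t + i"] i a b by simp
    then show ?thesis by (simp add: algebra_simps)
  qed
  have T1: "T - 1 \<noteq> 0"
  proof
    assume "T - 1 = 0"
    then have "T = of_nat 1" by simp
    then show False using t2 unfolding T_def by (simp only: of_nat_eq_iff)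
  qed
  have T0: "T \<noteq> 0" using t2 unfolding T_def by simp
  obtain p q where pq: "\<And>i. i < t \<Longrightarrow> x $ i = p" "\<And>i. i < t \<Longrightarrow> x $ (t + i) = q" and pq0: "p = 0" "q = 0"
  proof (cases "L = -1")
    case True
    have xi: "x $ i = - Z" "x $ (t + i) = Y + 2 * Z" if "i < t" for i
    proof -
      show h1: "x $ (t + i) = Y + 2 * Z" using eP[OF that] True by (simp add: algebra_simps)
      have "Z + x $ i = 0" using eL[OF that] True h1 by (simp add: algebra_simps)
      then show "x $ i = - Z" by (simp add: eq_neg_iff_add_eq_0 add.commute)
    qed
    have "Y = - T * Z" unfolding Y_def T_def using xi by simp
    moreover have "Z = T * (Y + 2 * Z)"
    proof -
      have "(\<Sum>i\<in>{0..<t}. x $ (t + i)) = (\<Sum>i\<in>{0..<t}. Y + 2 * Z)" using xi by (intro sum.cong) auto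
      then show ?thesis using Zs unfolding T_def by simp
    qed
    ultimately have "(T - 1) * (T - 1) * Z = 0" by (simp add: algebra_simps)
    then have Z0: "Z = 0" using T1 by simp
    then have "Y = 0" using \<open>Y = - T * Z\<close> by simp
    then show ?thesis using that[of "- Z" "Y + 2 * Z"] xi Z0 by simp
  next
    case False
    then have L2: "L = -2" using L by simp
    have xi: "x $ i = (Y + Z) / 2" "x $ (t + i) = (3 * Y + 5 * Z) / 2" if "i < t" for i
    proof -
      have "x $ (t + i) = Y + 2 * Z + x $ i" using eP[OF that] L2 by (simp add: algebra_simps)
      moreover have "x $ (t + i) = 2 * Y + 3 * Z - x $ i" using eL[OF that] L2 by (simp add: algebra_simps)
      ultimately show "x $ i = (Y + Z) / 2" "x $ (t + i) = (3 * Y + 5 * Z) / 2"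
        by (simp_all add: field_simps)
    qed
    have e1: "Y = T * ((Y + Z) / 2)"
    proof -
      have "(\<Sum>i\<in>{0..<t}. x $ i) = (\<Sum>i\<in>{0..<t}. (Y + Z) / 2)" using xi by (intro sum.cong) auto
      then show ?thesis using Y_def unfolding T_def by simp
    qed
    have e2: "Z = T * ((3 * Y + 5 * Z) / 2)"
    proof -
      have "(\<Sum>i\<in>{0..<t}. x $ (t + i)) = (\<Sum>i\<in>{0..<t}. (3 * Y + 5 * Z) / 2)" using xi by (intro sum.cong) auto
      then show ?thesis using Zs unfolding T_def by simp
    qed
    have "(2 - T) * Y = T * Z" using e1 by (simp add: field_simps)
    moreover have "(2 - 5 * T) * Z = 3 * T * Y" using e2 by (simp add: field_simps)
    ultimately have "(2 - T) * (2 - 5 * T) * Y = 3 * T * T * Y"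
      by (metis (no_types, lifting) mult.assoc mult.commute)
    then have "2 * (T * T + 2 - 6 * T) * Y = 0" by (simp add: algebra_simps)
    moreover have "T * T + 2 - 6 * T \<noteq> 0"
    proof
      assume "T * T + 2 - 6 * T = 0"
      then have "of_nat (t * t + 2) = (of_nat (6 * t) :: complex)" unfolding T_def by (simp add: algebra_simps)
      then have "t * t + 2 = 6 * t" by (simp only: of_nat_eq_iff)
      then show False using nat_quad_ne by blast
    qed
    ultimately have Y0: "Y = 0" by (metis mult_eq_0_iff zero_neq_numeral)
    then have "Z = 0" using \<open>(2 - T) * Y = T * Z\<close> T0 by simp
    then show ?thesis using that[of "(Y + Z) / 2" "(3 * Y + 5 * Z) / 2"] xi Y0 by simp
  qed
  have "x = 0\<^sub>v (t+t)"
  proof (rule eq_vecI)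
    fix j assume "j < dim_vec (0\<^sub>v (t+t) :: complex vec)"
    then have j: "j < t + t" by simp
    show "x $ j = 0\<^sub>v (t+t) $ j"
    proof (cases "j < t")
      case True then show ?thesis using pq pq0 j by simp
    next
      case False
      then obtain i where "j = t + i" "i < t" using j by (metis add_less_cancel_left le_Suc_ex not_less)
      then show ?thesis using pq pq0 j by simp
    qed
  qed (use x in simp)
  then show False using x(2) by simp
qed



lemma sum_take_mono: "a \<le> b \<Longrightarrow> sum_list (take a (ns::nat list)) \<le> sum_list (take b ns)"
proof -
  assume "a \<le> b"
  then obtain c where "b = a + c" using le_Suc_ex by blast
  then show ?thesis by (simp add: take_add)
qed

lemma in_block_unique: assumes "in_block ns j v" "in_block ns j' v" shows "j = j'"
proof (rule ccontr)
  assume "j \<noteq> j'"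
  then consider "j < j'" | "j' < j" by linarith
  then show False
  proof cases
    case 1
    then have "sum_list (take (Suc j) ns) \<le> sum_list (take j' ns)" by (intro sum_take_mono) simp
    then show False using assms unfolding in_block_def by linarith
  next
    case 2
    then have "sum_list (take (Suc j') ns) \<le> sum_list (take j ns)" by (intro sum_take_mono) simp
    then show False using assms unfolding in_block_def by linarith
  qed
qed

lemma block_exists_aux: "x < sum_list (ns::nat list) \<Longrightarrow>
   \<exists>j<length ns. sum_list (take j ns) \<le> x \<and> x < sum_list (take (Suc j) ns)"
proof (induction ns arbitrary: x)
  case Nil then show ?case by simp
next
  case (Cons a ns)
  show ?case
  proof (cases "x < a")
    case True then show ?thesis by (intro exI[of _ 0]) auto
  next
    case False
    then have "x - a < sum_list ns" using Cons.prems by simp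
    then obtain j where "j < length ns" "sum_list (take j ns) \<le> x - a" "x - a < sum_list (take (Suc j) ns)"
      using Cons.IH by blast
    then show ?thesis using False by (intro exI[of _ "Suc j"]) auto
  qed
qed

lemma in_block_exists: assumes "1 \<le> v" "v < sum_list ns + 1" shows "\<exists>j. in_block ns j v"
proof -
  have "v - 1 < sum_list ns" using assms by linarith
  from block_exists_aux[OF this] show ?thesis using assms unfolding in_block_def by blast
qed

lemma in_block_ge1: "in_block ns j v \<Longrightarrow> 1 \<le> v" by (simp add: in_block_def)

definition same_block :: "nat list \<Rightarrow> nat \<Rightarrow> nat \<Rightarrow> bool" where
  "same_block ns u v \<longleftrightarrow> (\<exists>j. in_block ns j u \<and> in_block ns j v)"

lemma same_block_trans: "same_block ns u v \<Longrightarrow> same_block ns v w \<Longrightarrow> same_block ns u w"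
  unfolding same_block_def using in_block_unique by blast

lemma same_block_sym: "same_block ns u v \<Longrightarrow> same_block ns v u"
  unfolding same_block_def by blast

lemma same_block_refl: "1 \<le> v \<Longrightarrow> v < sum_list ns + 1 \<Longrightarrow> same_block ns v v"
  unfolding same_block_def using in_block_exists by blast

lemma same_block_0: "\<not> same_block ns 0 v" "\<not> same_block ns v 0"
  unfolding same_block_def in_block_def by auto

lemma K_cone_iff: "K_cone ns u v \<longleftrightarrow> u \<noteq> v \<and> (u = 0 \<or> v = 0 \<or> same_block ns u v)"
  unfolding K_cone_def same_block_def by auto


lemma cone_ev:
  fixes lam :: real and x :: "complex vec"
  assumes n: "n = sum_list ns + 1" and x: "x \<in> carrier_vec n" "x \<noteq> 0\<^sub>v n"
    and ev: "\<forall>i<n. (map_mat complex_of_real (dist_matrix (K_cone ns) n) *\<^sub>v x) $ i = complex_of_real lam * x $ i"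
    and lam: "-1 < lam" "lam < -1/2"
  shows "lam / (1 + 2*lam) = (\<Sum>v\<in>{1..<n}. 1 / (lam + 1 + real (card {u\<in>{..<n}. same_block ns u v})))"
proof -
  let ?M = "map_mat complex_of_real (dist_matrix (K_cone ns) n)"
  define L where "L = complex_of_real lam"
  define S where "S = (\<Sum>j<n. x $ j)"
  define B where "B i = (\<Sum>j<n. if same_block ns j i then x $ j else 0)" for i
  define N where "N i = card {u\<in>{..<n}. same_block ns u i}" for i
  have n0: "0 < n" using n by simp
  have row0: "(?M *\<^sub>v x) $ 0 = S - x $ 0"
  proof -
    have "(?M *\<^sub>v x) $ 0 = (\<Sum>j<n. complex_of_real (real (graph_dist (K_cone ns) n 0 j)) * x $ j)"
      by (rule dm_entry[OF x(1) n0])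
    also have "\<dots> = (\<Sum>j<n. (if j = 0 then 0 else x $ j))"
      by (rule sum.cong) (auto simp: cone_dist K_cone_iff)
    also have "\<dots> = S - x $ 0"
    proof -
      have "S = (\<Sum>j<n. (if j = 0 then 0 else x $ j)) + (\<Sum>j<n. if j = 0 then x $ j else 0)"
        unfolding S_def by (subst sum.distrib[symmetric]) (auto intro: sum.cong)
      also have "(\<Sum>j<n. if j = 0 then x $ j else 0) = x $ 0" using n0 by (simp add: sum.delta)
      finally show ?thesis by simp
    qed
    finally show ?thesis .
  qed
  have rowi: "(?M *\<^sub>v x) $ i = 2 * S - x $ 0 - B i - x $ i" if i: "1 \<le> i" "i < n" for i
  proof -
    have si: "same_block ns i i" using same_block_refl[of i ns] i n by simp
    have "(?M *\<^sub>v x) $ i = (\<Sum>j<n. complex_of_real (real (graph_dist (K_cone ns) n i j)) * x $ j)"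
      by (rule dm_entry[OF x(1) i(2)])
    also have "\<dots> = (\<Sum>j<n. 2 * x $ j - (if j = 0 then x $ j else 0)
        - (if same_block ns j i then x $ j else 0) - (if j = i then x $ j else 0))"
    proof (rule sum.cong)
      fix j assume j: "j \<in> {..<n}"
      show "complex_of_real (real (graph_dist (K_cone ns) n i j)) * x $ j = 2 * x $ j - (if j = 0 then x $ j else 0)
        - (if same_block ns j i then x $ j else 0) - (if j = i then x $ j else 0)"
        using i j si same_block_0[of ns] same_block_sym[of ns i j] same_block_sym[of ns j i]
        by (auto simp: cone_dist K_cone_iff)
    qed simp
    also have "\<dots> = 2 * S - x $ 0 - B i - x $ i"
      using n0 i unfolding S_def B_def
      by (simp add: sum_subtractf sum_distrib_left sum.delta)
    finally show ?thesis .
  qed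
  have eq0: "L * x $ 0 = S - x $ 0"
  proof -
    have "(?M *\<^sub>v x) $ 0 = L * x $ 0" using ev n0 unfolding L_def by blast
    then show ?thesis using row0 by simp
  qed
  have eqi: "(L + 1) * x $ i = 2 * S - x $ 0 - B i" if "1 \<le> i" "i < n" for i
  proof -
    have "(?M *\<^sub>v x) $ i = L * x $ i" using ev that unfolding L_def by blast
    then have "L * x $ i = 2 * S - x $ 0 - B i - x $ i" using rowi[OF that] by simp
    then show ?thesis by (simp add: algebra_simps)
  qed
  have L1: "L + 1 \<noteq> 0"
  proof -
    have "complex_of_real (lam + 1) \<noteq> 0" using lam by (simp only: of_real_eq_0_iff)
    then show ?thesis unfolding L_def by simp
  qed
  have Bsame: "B u = B i" if "same_block ns u i" for u i
    unfolding B_def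
  proof (rule sum.cong[OF refl])
    fix j
    have "same_block ns j u \<longleftrightarrow> same_block ns j i"
      using that same_block_trans[of ns j u i] same_block_trans[of ns j i u] same_block_sym[of ns u i] by blast
    then show "(if same_block ns j u then x $ j else 0) = (if same_block ns j i then x $ j else 0)" by simp
  qed
  have xsame: "x $ u = x $ i" if "same_block ns u i" "i < n" "u < n" for u i
  proof -
    have "1 \<le> u" "1 \<le> i" using that(1) unfolding same_block_def by (auto dest: in_block_ge1)
    then have "(L + 1) * x $ u = (L + 1) * x $ i" using eqi that Bsame[OF that(1)] by simp
    then show ?thesis using L1 by simp
  qed
  have BN: "B i = of_nat (N i) * x $ i" if "i < n" for i
  proof -
    have "B i = (\<Sum>j\<in>{u\<in>{..<n}. same_block ns u i}. x $ j)"
      unfolding B_def by (rule sum.inter_filter[symmetric]) simp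
    also have "\<dots> = (\<Sum>j\<in>{u\<in>{..<n}. same_block ns u i}. x $ i)"
      using xsame that by (intro sum.cong) auto
    also have "\<dots> = of_nat (N i) * x $ i" unfolding N_def by simp
    finally show ?thesis .
  qed
  have den: "L + 1 + of_nat (N i) \<noteq> 0" for i
  proof -
    have "lam + 1 + real (N i) > 0" using lam by simp
    then have "complex_of_real (lam + 1 + real (N i)) \<noteq> 0" by (metis of_real_eq_0_iff less_irrefl)
    then show ?thesis unfolding L_def by simp
  qed
  have xi: "x $ i = (1 + 2 * L) * x $ 0 / (L + 1 + of_nat (N i))" if "1 \<le> i" "i < n" for i
  proof -
    have "(L + 1 + of_nat (N i)) * x $ i = 2 * S - x $ 0" using eqi[OF that] BN[OF that(2)]
      by (simp add: algebra_simps)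
    also have "\<dots> = (1 + 2 * L) * x $ 0"
    proof -
      have "S = x $ 0 + L * x $ 0" using eq0 by simp
      then show ?thesis by (simp add: algebra_simps)
    qed
    finally show ?thesis using den[of i] by (simp add: field_simps)
  qed
  have Ssplit: "S = x $ 0 + (\<Sum>i\<in>{1..<n}. x $ i)"
    unfolding S_def using n0 by (simp add: lessThan_atLeast0 sum.atLeast_Suc_lessThan)
  define F where "F = (\<Sum>v\<in>{1..<n}. 1 / (lam + 1 + real (N v)))"
  have "(\<Sum>i\<in>{1..<n}. x $ i) = (\<Sum>i\<in>{1..<n}. (1 + 2 * L) * x $ 0 / (L + 1 + of_nat (N i)))"
    using xi by (intro sum.cong) auto
  also have "\<dots> = (1 + 2 * L) * x $ 0 * complex_of_real F"
    unfolding F_def L_def by (simp add: sum_distrib_left divide_inverse)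
  finally have sumx: "(\<Sum>i\<in>{1..<n}. x $ i) = (1 + 2 * L) * x $ 0 * complex_of_real F" .
  have x0: "x $ 0 \<noteq> 0"
  proof
    assume z: "x $ 0 = 0"
    have "x = 0\<^sub>v n"
    proof (rule eq_vecI)
      fix i assume "i < dim_vec (0\<^sub>v n :: complex vec)"
      then have i: "i < n" by simp
      show "x $ i = 0\<^sub>v n $ i"
      proof (cases "i = 0")
        case True then show ?thesis using z i by simp
      next
        case False then show ?thesis using xi[of i] z i by simp
      qed
    qed (use x in simp)
    then show False using x(2) by simp
  qed
  have "L * x $ 0 = (1 + 2 * L) * x $ 0 * complex_of_real F" using eq0 Ssplit sumx by simp
  then have "L * x $ 0 = ((1 + 2 * L) * complex_of_real F) * x $ 0" by (simp add: ac_simps)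
  then have "L = (1 + 2 * L) * complex_of_real F" using x0 mult_right_cancel by blast
  then have "complex_of_real lam = complex_of_real ((1 + 2 * lam) * F)" unfolding L_def by simp
  then have "lam = (1 + 2 * lam) * F" using of_real_eq_iff by blast
  moreover have "1 + 2 * lam \<noteq> 0" using lam by simp
  ultimately show ?thesis unfolding F_def N_def by (simp add: field_simps)
qed


lemma cone_twin_ev:
  assumes n: "n = sum_list ns + 1" and uv: "u < n" "v < n" "u \<noteq> v"
    and tw: "\<And>w. w < n \<Longrightarrow> w \<noteq> u \<Longrightarrow> w \<noteq> v \<Longrightarrow> (K_cone ns w u \<longleftrightarrow> K_cone ns w v)"
  shows "spectrum_mult (dist_matrix (K_cone ns) n) (complex_of_real (- (if K_cone ns u v then 1 else 2))) > 0"
proof -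
  define dd where "dd i j = (if i = j then 0 else if K_cone ns i j then 1 else (2::nat))" for i j
  define f :: "nat \<Rightarrow> real" where "f j = (if j = u then 1 else 0) + (if j = v then -1 else 0)" for j
  have sym: "K_cone ns a b \<longleftrightarrow> K_cone ns b a" for a b unfolding K_cone_def by blast
  have rows: "(\<Sum>j<n. real (dd i j) * f j) = (- (if K_cone ns u v then 1 else 2)) * f i" if i: "i < n" for i
  proof -
    have "(\<Sum>j<n. real (dd i j) * f j) = (\<Sum>j<n. (if j = u then real (dd i j) else 0) + (if j = v then - real (dd i j) else 0))"
      unfolding f_def by (intro sum.cong) auto
    also have "\<dots> = real (dd i u) - real (dd i v)" using uv by (simp add: sum.distrib sum.delta)
    also have "\<dots> = (- (if K_cone ns u v then 1 else 2)) * f i"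
    proof -
      consider "i = u" | "i = v" | "i \<noteq> u" "i \<noteq> v" by blast
      then show ?thesis
      proof cases
        case 1 then show ?thesis using uv unfolding dd_def f_def by auto
      next
        case 2 then show ?thesis using uv sym[of v u] unfolding dd_def f_def by auto
      next
        case 3 then show ?thesis using tw[OF i] unfolding dd_def f_def by auto
      qed
    qed
    finally show ?thesis .
  qed
  show ?thesis
    by (rule real_ev[where dd=dd and f=f and ii=u]) (use uv rows cone_dist in \<open>auto simp: dd_def f_def\<close>)
qed

lemma same_block_twins: assumes "in_block ns j u" "in_block ns j v" and that: "w \<noteq> u" "w \<noteq> v"
  shows "K_cone ns w u \<longleftrightarrow> K_cone ns w v"
proof -
  have "u \<noteq> 0" "v \<noteq> 0" using assms by (auto simp: in_block_def)
  moreover have "same_block ns w u \<longleftrightarrow> same_block ns w v"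
    using assms in_block_unique[of ns j u] in_block_unique[of ns j v] unfolding same_block_def by blast
  ultimately show ?thesis using that unfolding K_cone_iff by blast
qed

lemma cone_has_ev:
  assumes n: "n = sum_list ns + 1" and len: "length ns \<ge> 2" and pos: "\<forall>i\<in>set ns. i \<ge> 1"
  shows "\<exists>d::real. (d = 1 \<or> d = 2) \<and> spectrum_mult (dist_matrix (K_cone ns) n) (complex_of_real (- d)) > 0"
proof -
  obtain a b rest where ns: "ns = a # b # rest" using len
    by (metis One_nat_def Suc_1 length_0_conv length_Cons list.exhaust not_less_eq_eq zero_le)
  have a1: "a \<ge> 1" "b \<ge> 1" using pos ns by auto
  have nab: "n \<ge> a + b + 1" using n ns by simp
  have ev: "\<exists>d::real. (d = 1 \<or> d = 2) \<and> spectrum_mult (dist_matrix (K_cone ns) n) (complex_of_real (- d)) > 0"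
    if "u < n" "v < n" "u \<noteq> v" "\<And>w. w < n \<Longrightarrow> w \<noteq> u \<Longrightarrow> w \<noteq> v \<Longrightarrow> (K_cone ns w u \<longleftrightarrow> K_cone ns w v)" for u v
  proof -
    have "spectrum_mult (dist_matrix (K_cone ns) n) (complex_of_real (- (if K_cone ns u v then 1 else 2))) > 0"
      by (rule cone_twin_ev[OF n that])
    then show ?thesis by (cases "K_cone ns u v") auto
  qed
  consider "a \<ge> 2" | "a = 1" "b \<ge> 2" | "a = 1" "b = 1" using a1 by linarith
  then show ?thesis
  proof cases
    case 1
    have i1: "in_block ns 0 1" and i2: "in_block ns 0 2" using 1 unfolding ns in_block_def by auto
    show ?thesis
    proof (rule ev[of 1 2])
      fix w :: nat assume "w \<noteq> 1" "w \<noteq> 2"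
      then show "K_cone ns w 1 \<longleftrightarrow> K_cone ns w 2" by (rule same_block_twins[OF i1 i2])
    qed (use nab 1 in auto)
  next
    case 2
    have i1: "in_block ns 1 2" and i2: "in_block ns 1 3" using 2 unfolding ns in_block_def by auto
    show ?thesis
    proof (rule ev[of 2 3])
      fix w :: nat assume "w \<noteq> 2" "w \<noteq> 3"
      then show "K_cone ns w 2 \<longleftrightarrow> K_cone ns w 3" by (rule same_block_twins[OF i1 i2])
    qed (use nab 2 in auto)
  next
    case 3
    have b0: "in_block ns 0 w \<longleftrightarrow> w = 1" for w using 3 unfolding ns in_block_def by auto
    have b1: "in_block ns 1 w \<longleftrightarrow> w = 2" for w using 3 unfolding ns in_block_def by auto
    have s1: "\<not> same_block ns w 1" if "w \<noteq> 1" for w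
    proof
      assume "same_block ns w 1"
      then obtain j where "in_block ns j w" "in_block ns j 1" unfolding same_block_def by blast
      moreover have "in_block ns 0 1" using b0 by simp
      ultimately have "in_block ns 0 w" using in_block_unique[of ns j 1 0] by simp
      then show False using b0 that by simp
    qed
    have s2: "\<not> same_block ns w 2" if "w \<noteq> 2" for w
    proof
      assume "same_block ns w 2"
      then obtain j where "in_block ns j w" "in_block ns j 2" unfolding same_block_def by blast
      moreover have "in_block ns 1 2" using b1 by simp
      ultimately have "in_block ns 1 w" using in_block_unique[of ns j 2 1] by simp
      then show False using b1 that by simp
    qed
    show ?thesis
    proof (rule ev[of 1 2])
      fix w :: nat assume "w \<noteq> 1" "w \<noteq> 2"
      then show "K_cone ns w 1 \<longleftrightarrow> K_cone ns w 2" using s1 s2 unfolding K_cone_iff by auto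
    qed (use nab 3 in auto)
  qed
qed


lemma mono_contra:
  fixes la lb :: real and N :: "nat \<Rightarrow> nat" and A :: "nat set"
  assumes "finite A" "-1 < la" "la < lb" "lb < -1/2"
    and e1: "la / (1 + 2*la) = (\<Sum>v\<in>A. 1 / (la + 1 + real (N v)))"
    and e2: "lb / (1 + 2*lb) = (\<Sum>v\<in>A. 1 / (lb + 1 + real (N v)))"
  shows False
proof -
  have "(\<Sum>v\<in>A. 1 / (lb + 1 + real (N v))) \<le> (\<Sum>v\<in>A. 1 / (la + 1 + real (N v)))"
  proof (rule sum_mono)
    fix v
    have "0 < la + 1 + real (N v)" using assms by simp
    moreover have "la + 1 + real (N v) \<le> lb + 1 + real (N v)" using assms by simp
    ultimately show "1 / (lb + 1 + real (N v)) \<le> 1 / (la + 1 + real (N v))"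
      by (rule frac_le[of 1, rotated 2]) auto
  qed
  moreover have "la / (1 + 2*la) < lb / (1 + 2*lb)"
  proof -
    have d1: "1 + 2*la < 0" "1 + 2*lb < 0" using assms by auto
    have "la / (1 + 2*la) - lb / (1 + 2*lb) = (la - lb) / ((1 + 2*la) * (1 + 2*lb))"
      using d1 by (simp add: field_simps)
    moreover have "(la - lb) / ((1 + 2*la) * (1 + 2*lb)) < 0"
      using d1 assms by (intro divide_neg_pos) (auto intro: mult_neg_neg)
    ultimately show ?thesis by linarith
  qed
  ultimately show False using e1 e2 by linarith
qed

lemma sqrt2_bounds: "-3/5 < sqrt 2 - 2" "sqrt 2 - 2 < (-1/2::real)"
proof -
  have "sqrt (49/25) < sqrt (2::real)" by (subst real_sqrt_less_iff) simp
  moreover have "sqrt (49/25) = (7/5::real)" by (rule real_sqrt_unique) (auto simp: power2_eq_square)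
  ultimately show "-3/5 < sqrt 2 - 2" by simp
  have "sqrt (2::real) < sqrt (9/4)" by (subst real_sqrt_less_iff) simp
  moreover have "sqrt (9/4) = (3/2::real)" by (rule real_sqrt_unique) (auto simp: power2_eq_square)
  ultimately show "sqrt 2 - 2 < (-1/2::real)" by simp
qed

theorem theorem3p6:
  fixes s t n :: nat and ns :: "nat list"
  assumes "2 \<le> t" and "t \<le> s" and "s + t = n"
    and "length ns \<ge> 2" and "\<forall>i \<in> set ns. i \<ge> 1" and "sum_list ns + 1 = n"
  shows "\<not> D_cospectral (K_pend s t) n (K_cone ns) n"
proof
  assume "D_cospectral (K_pend s t) n (K_cone ns) n"
  then have sp: "spectrum_mult (dist_matrix (K_pend s t) n) = spectrum_mult (dist_matrix (K_cone ns) n)"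
    by (simp add: D_cospectral_def)
  have nst: "n = s + t" using assms by simp
  have nsum: "n = sum_list ns + 1" using assms by simp
  define G where "G l = (\<Sum>v\<in>{1..<n}. 1 / (l + 1 + real (card {u\<in>{..<n}. same_block ns u v})))" for l :: real
  have key: "l / (1 + 2*l) = G l"
    if l: "-1 < l" "l < -1/2" and pos: "spectrum_mult (dist_matrix (K_pend s t) n) (complex_of_real l) > 0" for l
  proof -
    have "spectrum_mult (dist_matrix (K_cone ns) n) (complex_of_real l) > 0" using pos sp by simp
    then have "eigenvalue (map_mat complex_of_real (dist_matrix (K_cone ns) n)) (complex_of_real l)"
      using spec_pos_iff[OF dist_matrix_carrier] by blast
    then obtain x where x: "x \<in> carrier_vec n" "x \<noteq> 0\<^sub>v n"
      "\<forall>i<n. (map_mat complex_of_real (dist_matrix (K_cone ns) n) *\<^sub>v x) $ i = complex_of_real l * x $ i"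
    proof -
      have Mc: "map_mat complex_of_real (dist_matrix (K_cone ns) n) \<in> carrier_mat n n"
        using dist_matrix_carrier[of "K_cone ns" n] by simp
      show ?thesis using eigenvalue_iff[OF Mc] \<open>eigenvalue _ _\<close> that by blast
    qed
    show ?thesis unfolding G_def by (rule cone_ev[OF nsum x l])
  qed
  consider "t < s" | "t = s" using assms by linarith
  then show False
  proof cases
    case 1
    have p1: "spectrum_mult (dist_matrix (K_pend s t) n) (complex_of_real (sqrt 2 - 2)) > 0"
      using K_ev1[OF assms(1,2)] nst by simp
    obtain mu where mu: "-1 < mu" "mu < -3/5"
      "spectrum_mult (dist_matrix (K_pend s t) n) (complex_of_real mu) > 0"
      using K_ev2[OF assms(1) 1] nst by auto
    have e1: "mu / (1 + 2*mu) = G mu" using key mu by simp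
    have e2: "(sqrt 2 - 2) / (1 + 2*(sqrt 2 - 2)) = G (sqrt 2 - 2)"
      by (rule key) (use p1 sqrt2_bounds in linarith)+
    show False
      by (rule mono_contra[where la=mu and lb="sqrt 2 - 2" and A="{1..<n}"
            and N="\<lambda>v. card {u\<in>{..<n}. same_block ns u v}"])
         (use mu sqrt2_bounds e1 e2 in \<open>auto simp: G_def\<close>)
  next
    case 2
    obtain d :: real where d: "d = 1 \<or> d = 2"
      "spectrum_mult (dist_matrix (K_cone ns) n) (complex_of_real (- d)) > 0"
      using cone_has_ev[OF nsum assms(4,5)] by blast
    have "spectrum_mult (dist_matrix (K_pend s t) n) (complex_of_real (- d)) > 0" using d sp by simp
    then have "eigenvalue (map_mat complex_of_real (dist_matrix (K_pend t t) (t + t))) (complex_of_real (- d))"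
      using spec_pos_iff[OF dist_matrix_carrier] nst 2 by simp
    moreover have "complex_of_real (- d) = -1 \<or> complex_of_real (- d) = -2" using d by auto
    ultimately show False using K_tt_noev[OF assms(1)] by blast
  qed
qed

end
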